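(* Let $a=a_0+a_1e_1+a_2e_2+a_3e_3\in C\ell_2\setminus\mathbb{R}$. Then there exists $u\in C\ell_2\setminus Z(C\ell_2)$ such that $$u^{-1}au=\begin{cases} a_0+\sqrt{G(a)}\,e_2, & G(a)>0;\\ a_0+\sqrt{-G(a)}\,e_3, & G(a)<0;\\ a_0+e_2+e_3, & G(a)=0.\end{cases}$$
   Context: $C\ell_2$ is the 4-dimensional real associative algebra with basis $1,e_1,e_2,e_3$ and multiplication $e_1^2=e_2^2=1$, $e_3^2=-1$, $e_1e_2=e_3=-e_2e_1$, $e_1e_3=e_2=-e_3e_1$, $e_3e_2=e_1=-e_2e_3$; $\mathbb{R}$ is identified with $\mathbb{R}\cdot1$. For $a=a_0+a_1e_1+a_2e_2+a_3e_3$: $G(a)=a_1^2+a_2^2-a_3^2$, $H_a=a_0^2-a_1^2-a_2^2+a_3^2$; $Z(C\ell_2)=\{a:H_a=0\}$, and elements outside $Z(C\ell_2)$ are invertible. *)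

theory Defs
  imports Complex_Main
begin

text \<open>The Clifford algebra Cl_2 with basis 1, e1, e2, e3 and
 e1^2 = e2^2 = 1, e3^2 = -1, e1 e2 = e3 = - e2 e1, e1 e3 = e2 = - e3 e1,
 e3 e2 = e1 = - e2 e3.\<close>

datatype cl2 = Cl2 (c0: real) (c1: real) (c2: real) (c3: real)

instantiation cl2 :: ring_1
begin
definition "0 = Cl2 0 0 0 0"
definition "1 = Cl2 1 0 0 0"
definition "a + b = Cl2 (c0 a + c0 b) (c1 a + c1 b) (c2 a + c2 b) (c3 a + c3 b)"
definition "a - b = Cl2 (c0 a - c0 b) (c1 a - c1 b) (c2 a - c2 b) (c3 a - c3 b)"
definition "- a = Cl2 (- c0 a) (- c1 a) (- c2 a) (- c3 a)"
definition "a * b = Cl2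
   (c0 a * c0 b + c1 a * c1 b + c2 a * c2 b - c3 a * c3 b)
   (c0 a * c1 b + c1 a * c0 b - c2 a * c3 b + c3 a * c2 b)
   (c0 a * c2 b + c2 a * c0 b + c1 a * c3 b - c3 a * c1 b)
   (c0 a * c3 b + c3 a * c0 b + c1 a * c2 b - c2 a * c1 b)"
instance
  by standard (auto simp: zero_cl2_def one_cl2_def plus_cl2_def minus_cl2_def
      uminus_cl2_def times_cl2_def cl2.expand algebra_simps)
end

definition e1 :: cl2 where "e1 = Cl2 0 1 0 0"
definition e2 :: cl2 where "e2 = Cl2 0 0 1 0"
definition e3 :: cl2 where "e3 = Cl2 0 0 0 1"

definition scal :: "real \<Rightarrow> cl2" where "scal r = Cl2 r 0 0 0"

definition G :: "cl2 \<Rightarrow> real" where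
  "G a = (c1 a)^2 + (c2 a)^2 - (c3 a)^2"

definition H :: "cl2 \<Rightarrow> real" where
  "H a = (c0 a)^2 - (c1 a)^2 - (c2 a)^2 + (c3 a)^2"

definition Zcl2 :: "cl2 set" where "Zcl2 = {a. H a = 0}"

definition inv_cl2 :: "cl2 \<Rightarrow> cl2" where
  "inv_cl2 u = (THE v. u * v = 1 \<and> v * u = 1)"

lemma cl2_basis_sanity:
  "e1 * e1 = 1" "e2 * e2 = 1" "e3 * e3 = - 1" "e1 * e2 = e3" "e2 * e1 = - e3"
  "e1 * e3 = e2" "e3 * e1 = - e2" "e3 * e2 = e1" "e2 * e3 = - e1"
  "Cl2 x0 x1 x2 x3 = scal x0 + scal x1 * e1 + scal x2 * e2 + scal x3 * e3"
  by (simp_all add: e1_def e2_def e3_def scal_def times_cl2_def one_cl2_def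
      uminus_cl2_def plus_cl2_def)

end

theory Submission
  imports Defs
begin

definition cj :: "cl2 \<Rightarrow> cl2" where
  "cj u = Cl2 (c0 u / H u) (- c1 u / H u) (- c2 u / H u) (- c3 u / H u)"

lemma cj_inv:
  assumes "H u \<noteq> 0"
  shows "u * cj u = 1 \<and> cj u * u = 1"
proof -
  obtain x0 x1 x2 x3 where u: "u = Cl2 x0 x1 x2 x3" by (cases u)
  define h where "h = H u"
  have h: "h = x0*x0 - x1*x1 - x2*x2 + x3*x3" by (simp add: h_def u H_def power2_eq_square)
  have hn: "h \<noteq> 0" using assms h_def by simp
  have c: "cj (Cl2 x0 x1 x2 x3) = Cl2 (x0/h) (-x1/h) (-x2/h) (-x3/h)" using u by (simp add: cj_def h_def)
  have e1: "(x0*x0 - x1*x1 - x2*x2 + x3*x3)/h = 1" using hn h by simp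
  have e2: "h * h + (h * (x1 * x1) + h * (x2 * x2)) = h * (x0 * x0) + h * (x3 * x3)"
    unfolding h by (simp add: algebra_simps)
  show ?thesis unfolding u c using hn e1 e2
    by (simp add: times_cl2_def one_cl2_def field_simps)
qed

lemma inv_eq:
  assumes "H u \<noteq> 0"
  shows "inv_cl2 u = cj u"
  unfolding inv_cl2_def
proof (rule the_equality)
  show "u * cj u = 1 \<and> cj u * u = 1" using cj_inv[OF assms] .
next
  fix v assume "u * v = 1 \<and> v * u = 1"
  then have "v = (cj u * u) * v" using cj_inv[OF assms] by simp
  also have "\<dots> = cj u * (u * v)" by (simp add: mult.assoc)
  also have "\<dots> = cj u" using \<open>u * v = 1 \<and> v * u = 1\<close> by simp
  finally show "v = cj u" .
qed

lemma conj_lemma: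
  assumes "H u \<noteq> 0" "a * u = u * b"
  shows "inv_cl2 u * a * u = b"
proof -
  have "inv_cl2 u * a * u = cj u * (a * u)" by (simp add: inv_eq[OF assms(1)] mult.assoc)
  also have "\<dots> = (cj u * u) * b" using assms(2) by (simp add: mult.assoc)
  also have "\<dots> = b" using cj_inv[OF assms(1)] by simp
  finally show ?thesis .
qed

lemma ex_conj:
  assumes "H u \<noteq> 0" "a * u = u * b"
  shows "\<exists>u. u \<notin> Zcl2 \<and> inv_cl2 u * a * u = b"
  using assms conj_lemma unfolding Zcl2_def by blast

theorem lemma5p3:
  fixes a :: cl2
  assumes "a \<notin> range scal"
  shows "\<exists>u. u \<notin> Zcl2 \<and>
    inv_cl2 u * a * u =
      (if G a > 0 then scal (c0 a) + scal (sqrt (G a)) * e2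
       else if G a < 0 then scal (c0 a) + scal (sqrt (- G a)) * e3
       else scal (c0 a) + e2 + e3)"
proof -
  obtain a0 a1 a2 a3 where a: "a = Cl2 a0 a1 a2 a3" by (cases a)
  have Ga: "G a = a1^2 + a2^2 - a3^2" by (simp add: a G_def)
  consider "G a > 0" | "G a < 0" | "G a = 0" by linarith
  then show ?thesis
  proof cases
    case 1
    define s where "s = sqrt (G a)"
    have sp: "s > 0" using 1 s_def by simp
    have ss: "s^2 = a1^2 + a2^2 - a3^2" using 1 s_def Ga by simp
    have b: "scal (c0 a) + scal (sqrt (G a)) * e2 = Cl2 a0 0 s 0"
      by (simp add: a s_def scal_def e2_def times_cl2_def plus_cl2_def)
    have "\<exists>u. u \<notin> Zcl2 \<and> inv_cl2 u * a * u = Cl2 a0 0 s 0"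
    proof (cases "a2 = - s")
      case False
      show ?thesis
      proof (rule ex_conj[of "Cl2 0 a1 (a2+s) a3"])
        have "H (Cl2 0 a1 (a2+s) a3) = -2*s*(s+a2)" using ss
          by (simp add: H_def algebra_simps power2_eq_square)
        then show "H (Cl2 0 a1 (a2+s) a3) \<noteq> 0" using sp False by auto
        show "a * Cl2 0 a1 (a2 + s) a3 = Cl2 0 a1 (a2 + s) a3 * Cl2 a0 0 s 0"
          using ss by (simp add: a times_cl2_def algebra_simps power2_eq_square)
      qed
    next
      case True
      show ?thesis
      proof (rule ex_conj[of "Cl2 a1 0 (-a3) (s - a2)"])
        have "H (Cl2 a1 0 (-a3) (s - a2)) = 2*s*(s-a2)" using ss
          by (simp add: H_def algebra_simps power2_eq_square)
        then show "H (Cl2 a1 0 (-a3) (s - a2)) \<noteq> 0" using sp True by auto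
        show "a * Cl2 a1 0 (-a3) (s - a2) = Cl2 a1 0 (-a3) (s - a2) * Cl2 a0 0 s 0"
          using ss by (simp add: a times_cl2_def algebra_simps power2_eq_square)
      qed
    qed
    then show ?thesis using 1 b by simp
  next
    case 2
    define s where "s = sqrt (- G a)"
    have sp: "s > 0" using 2 s_def by simp
    have ss: "s^2 = a3^2 - a1^2 - a2^2" using 2 s_def Ga by simp
    have b: "scal (c0 a) + scal (sqrt (- G a)) * e3 = Cl2 a0 0 0 s"
      by (simp add: a s_def scal_def e3_def times_cl2_def plus_cl2_def)
    have "\<exists>u. u \<notin> Zcl2 \<and> inv_cl2 u * a * u = Cl2 a0 0 0 s"
    proof (cases "a3 = - s")
      case False
      show ?thesis
      proof (rule ex_conj[of "Cl2 0 a1 a2 (a3+s)"])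
        have "H (Cl2 0 a1 a2 (a3+s)) = 2*s*(s+a3)" using ss
          by (simp add: H_def algebra_simps power2_eq_square)
        then show "H (Cl2 0 a1 a2 (a3+s)) \<noteq> 0" using sp False by auto
        show "a * Cl2 0 a1 a2 (a3+s) = Cl2 0 a1 a2 (a3+s) * Cl2 a0 0 0 s"
          using ss by (simp add: a times_cl2_def algebra_simps power2_eq_square)
      qed
    next
      case True
      show ?thesis
      proof (rule ex_conj[of "Cl2 a1 0 (s - a3) (-a2)"])
        have "H (Cl2 a1 0 (s - a3) (-a2)) = -2*s*(s-a3)" using ss
          by (simp add: H_def algebra_simps power2_eq_square)
        then show "H (Cl2 a1 0 (s - a3) (-a2)) \<noteq> 0" using sp True by auto
        show "a * Cl2 a1 0 (s - a3) (-a2) = Cl2 a1 0 (s - a3) (-a2) * Cl2 a0 0 0 s"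
          using ss by (simp add: a times_cl2_def algebra_simps power2_eq_square)
      qed
    qed
    then show ?thesis using 2 b by simp
  next
    case 3
    have ss: "a1^2 + a2^2 - a3^2 = 0" using 3 Ga by simp
    have b: "scal (c0 a) + e2 + e3 = Cl2 a0 0 1 1"
      by (simp add: a scal_def e2_def e3_def plus_cl2_def)
    have "\<exists>u. u \<notin> Zcl2 \<and> inv_cl2 u * a * u = Cl2 a0 0 1 1"
    proof (cases "a2 = a3")
      case False
      show ?thesis
      proof (rule ex_conj[of "Cl2 0 a1 (a2+1) (a3+1)"])
        have "H (Cl2 0 a1 (a2+1) (a3+1)) = 2*(a3-a2)" using ss
          by (simp add: H_def algebra_simps power2_eq_square)
        then show "H (Cl2 0 a1 (a2+1) (a3+1)) \<noteq> 0" using False by auto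
        show "a * Cl2 0 a1 (a2+1) (a3+1) = Cl2 0 a1 (a2+1) (a3+1) * Cl2 a0 0 1 1"
          using ss by (simp add: a times_cl2_def algebra_simps power2_eq_square)
      qed
    next
      case True
      have a1: "a1 = 0" using ss True by simp
      have a2: "a2 \<noteq> 0"
      proof
        assume "a2 = 0"
        then have "a = scal a0" using a a1 True by (simp add: scal_def)
        then show False using assms by auto
      qed
      show ?thesis
      proof (rule ex_conj[of "Cl2 (a2+1) (a2-1) 0 0"])
        have "H (Cl2 (a2+1) (a2-1) 0 0) = 4*a2"
          by (simp add: H_def algebra_simps power2_eq_square)
        then show "H (Cl2 (a2+1) (a2-1) 0 0) \<noteq> 0" using a2 by auto
        show "a * Cl2 (a2+1) (a2-1) 0 0 = Cl2 (a2+1) (a2-1) 0 0 * Cl2 a0 0 1 1"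
          using a1 True by (simp add: a times_cl2_def algebra_simps)
      qed
    qed
    then show ?thesis using 3 b by simp
  qed
qed

end
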